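(* Let $G=(V,w)$ be a weighted graph and let $Z\in\mathcal{M}(G)$ be a crossless non-star minimum cut with shores $X_0$ and $X_1=V\setminus X_0$. For $b\in\{0,1\}$ let $\mathcal{M}_b=\{S\in\mathcal{M}(G): S\subseteq Z\cup E(X_b)\}$, and let $\{G_0,G_1\}=\mathrm{sep}(G,Z)$. Then for each $b\in\{0,1\}$, $\dim\,\mathrm{span}\{\chi(S): S\in\mathcal{M}_b\}=\mathrm{cdim}(G_b)$.
   Context: A weighted graph $G=(V,w)$ has nonnegative weights on unordered pairs of distinct vertices; its edge set is $E=\{e:w(e)>0\}$. For $X\subseteq V$, $E(X)$ is the set of edges with both endpoints in $X$. For $\emptyset\ne X\subsetneq V$, $\Delta(X)$ is the set of edges with exactly one endpoint in $X$ (a cut with shores $X$, $V\setminus X$). A cut is a star cut if one shore is a single vertex, otherwise non-star. $\mathcal{M}(G)$ is the set of minimum-weight cuts; $\chi(S)$ is the characteristic vector of $S$ indexed by the edges of the graph in question; $\mathrm{cdim}(G)=\dim\,\mathrm{span}\{\chi(S):S\in\mathcal{M}(G)\}$. Sets $X,Y$ cross if $X\cap Y$, $X\setminus Y$, $Y\setminus X$, $V\setminus(X\cup Y)$ are all nonempty; cuts cross if their shores cross. A mincut is crossless if no other mincut crosses it. The separation $\mathrm{sep}(G,Z)$ along a cut $Z$ with shores $X_0,X_1$ is the pair of graphs $G_b=(X_b\cup\{v_{1-b}\},w_b)$, $b\in\{0,1\}$, with new vertices $v_0,v_1$, where $w_b(\{x,y\})=w(\{x,y\})$ for $x,y\in X_b$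 and $w_b(\{x,v_{1-b}\})=\sum_{y\in X_{1-b}}w(\{x,y\})$ for $x\in X_b$. *)

theory Defs
  imports "HOL-Analysis.Analysis" "HOL-Library.Function_Algebras"
begin

definition weighted_graph :: "'v set \<Rightarrow> ('v set \<Rightarrow> real) \<Rightarrow> bool" where
  "weighted_graph V w \<longleftrightarrow> finite V \<and> (\<forall>x\<in>V. \<forall>y\<in>V. x \<noteq> y \<longrightarrow> w {x, y} \<ge> 0)"

definition edges :: "'v set \<Rightarrow> ('v set \<Rightarrow> real) \<Rightarrow> 'v set set" where
  "edges V w = {e. \<exists>x\<in>V. \<exists>y\<in>V. x \<noteq> y \<and> e = {x, y} \<and> w e > 0}"

definition inner_edges :: "'v set \<Rightarrow> ('v set \<Rightarrow> real) \<Rightarrow> 'v set \<Rightarrow> 'v set set" where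
  "inner_edges V w X = {e \<in> edges V w. e \<subseteq> X}"

definition delta :: "'v set \<Rightarrow> ('v set \<Rightarrow> real) \<Rightarrow> 'v set \<Rightarrow> 'v set set" where
  "delta V w X = {e \<in> edges V w. card (e \<inter> X) = 1}"

definition is_shore :: "'v set \<Rightarrow> 'v set \<Rightarrow> bool" where
  "is_shore V X \<longleftrightarrow> X \<noteq> {} \<and> X \<subset> V"

definition cuts :: "'v set \<Rightarrow> ('v set \<Rightarrow> real) \<Rightarrow> 'v set set set" where
  "cuts V w = {delta V w X | X. is_shore V X}"

definition cut_weight :: "('v set \<Rightarrow> real) \<Rightarrow> 'v set set \<Rightarrow> real" where
  "cut_weight w S = (\<Sum>e\<in>S. w e)"

definition mincuts :: "'v set \<Rightarrow> ('v set \<Rightarrow> real) \<Rightarrow> 'v set set set" where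
  "mincuts V w = {S \<in> cuts V w. \<forall>T \<in> cuts V w. cut_weight w S \<le> cut_weight w T}"

definition crosses :: "'v set \<Rightarrow> 'v set \<Rightarrow> 'v set \<Rightarrow> bool" where
  "crosses V X Y \<longleftrightarrow> X \<inter> Y \<noteq> {} \<and> X - Y \<noteq> {} \<and> Y - X \<noteq> {} \<and> V - (X \<union> Y) \<noteq> {}"

text \<open>The mincut with shore X is crossless: no other mincut (as an edge set) has a
  shore crossing X (crossing of X or of V - X is the same notion).\<close>
definition crossless :: "'v set \<Rightarrow> ('v set \<Rightarrow> real) \<Rightarrow> 'v set \<Rightarrow> bool" where
  "crossless V w X \<longleftrightarrow> (\<forall>Y. is_shore V Y \<and> delta V w Y \<in> mincuts V w \<and> delta V w Y \<noteq> delta V w X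
      \<longrightarrow> \<not> crosses V X Y)"

definition nonstar :: "'v set \<Rightarrow> 'v set \<Rightarrow> bool" where
  "nonstar V X \<longleftrightarrow> card X \<ge> 2 \<and> card (V - X) \<ge> 2"

text \<open>Characteristic vector of an edge set (as a real function on pairs; it vanishes
  outside the edge set of the graph since S is a set of edges).\<close>
definition chi :: "'v set set \<Rightarrow> 'v set \<Rightarrow> real" where
  "chi S = (\<lambda>e. if e \<in> S then 1 else 0)"

definition dimspan :: "('b \<Rightarrow> real) set \<Rightarrow> nat" where
  "dimspan A = vector_space.dim (\<lambda>(c::real) f x. c * f x) A"

definition cdim :: "'v set \<Rightarrow> ('v set \<Rightarrow> real) \<Rightarrow> nat" where
  "cdim V w = dimspan (chi ` mincuts V w)"

text \<open>Separation along the cut with shore X_b (other shore X_{1-b} = V - X_b):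
  the graph G_b has vertices Some ` X_b plus a new vertex None (standing for v_{1-b}).\<close>
definition sep_V :: "'v set \<Rightarrow> 'v option set" where
  "sep_V Xb = Some ` Xb \<union> {None}"

definition sep_w :: "'v set \<Rightarrow> ('v set \<Rightarrow> real) \<Rightarrow> 'v option set \<Rightarrow> real" where
  "sep_w Xother w e = (if None \<in> e then (\<Sum>y\<in>Xother. w (insert y (Some -` e)))
                       else w (Some -` e))"

end

theory Submission
  imports Defs
begin


lemma edges_two: "e \<in> edges V w \<Longrightarrow> \<exists>x y. x \<in> V \<and> y \<in> V \<and> x \<noteq> y \<and> e = {x,y} \<and> w e > 0"
  unfolding edges_def by auto

lemma edges_pair: "x \<noteq> y \<Longrightarrow> {x,y} \<in> edges V w \<longleftrightarrow> x \<in> V \<and> y \<in> V \<and> w {x,y} > 0"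
  unfolding edges_def by (auto simp: doubleton_eq_iff)

lemma delta_sub: "delta V w X \<subseteq> edges V w"
  unfolding delta_def by auto

lemma delta_pair: assumes "x \<noteq> y"
  shows "{x,y} \<in> delta V w X \<longleftrightarrow> {x,y} \<in> edges V w \<and> (x \<in> X \<longleftrightarrow> y \<notin> X)"
proof -
  have "card ({x,y} \<inter> X) = 1 \<longleftrightarrow> (x \<in> X \<longleftrightarrow> y \<notin> X)"
    using assms by (cases "x \<in> X"; cases "y \<in> X") (auto simp: Int_insert_left)
  then show ?thesis unfolding delta_def by auto
qed

lemma delta_compl: assumes "X \<subseteq> V" shows "delta V w (V - X) = delta V w X"
proof (rule set_eqI)
  fix e show "e \<in> delta V w (V - X) \<longleftrightarrow> e \<in> delta V w X"
  proof (cases "e \<in> edges V w")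
    case True
    then obtain x y where "x \<in> V" "y \<in> V" "x \<noteq> y" "e = {x,y}" using edges_two by metis
    then show ?thesis using True delta_pair[of x y] by auto
  next
    case False then show ?thesis using delta_sub by blast
  qed
qed

lemma finite_edges: assumes "finite V" shows "finite (edges V w)"
proof -
  have "edges V w \<subseteq> (\<lambda>(x,y). {x,y}) ` (V \<times> V)" unfolding edges_def by auto
  then show ?thesis using assms finite_subset by blast
qed

lemma cut_weight_formula:
  assumes wg: "weighted_graph V w" and XV: "X \<subseteq> V"
  shows "cut_weight w (delta V w X) = (\<Sum>x\<in>X. \<Sum>y\<in>V-X. w {x,y})"
proof -
  have fin: "finite V" using wg unfolding weighted_graph_def by auto
  define P where "P = {p \<in> X \<times> (V - X). w {fst p, snd p} > 0}"
  have "(\<Sum>x\<in>X. \<Sum>y\<in>V-X. w {x,y}) = (\<Sum>p\<in>X \<times> (V-X). w {fst p, snd p})"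
    by (simp add: sum.cartesian_product case_prod_beta)
  also have "\<dots> = (\<Sum>p\<in>P. w {fst p, snd p})"
  proof (rule sum.mono_neutral_right)
    show "finite (X \<times> (V - X))" using fin XV finite_subset by blast
    show "P \<subseteq> X \<times> (V - X)" unfolding P_def by auto
    show "\<forall>i\<in>X \<times> (V - X) - P. w {fst i, snd i} = 0"
    proof
      fix i assume i: "i \<in> X \<times> (V - X) - P"
      then have "fst i \<noteq> snd i" "fst i \<in> V" "snd i \<in> V" using XV by auto
      then have "w {fst i, snd i} \<ge> 0" using wg unfolding weighted_graph_def by auto
      then show "w {fst i, snd i} = 0" using i unfolding P_def by auto
    qed
  qed
  also have "\<dots> = (\<Sum>e\<in>(\<lambda>p. {fst p, snd p}) ` P. w e)"
  proof (rule sum.reindex[symmetric, unfolded comp_def])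
    show "inj_on (\<lambda>p. {fst p, snd p}) P"
      unfolding inj_on_def P_def by (auto simp: doubleton_eq_iff)
  qed
  also have "(\<lambda>p. {fst p, snd p}) ` P = delta V w X"
  proof (rule set_eqI)
    fix e show "e \<in> (\<lambda>p. {fst p, snd p}) ` P \<longleftrightarrow> e \<in> delta V w X"
    proof
      assume "e \<in> (\<lambda>p. {fst p, snd p}) ` P"
      then obtain x y where "x \<in> X" "y \<in> V" "y \<notin> X" "w {x,y} > 0" "e = {x,y}"
        unfolding P_def by auto
      moreover have "x \<noteq> y" using \<open>x \<in> X\<close> \<open>y \<notin> X\<close> by auto
      ultimately show "e \<in> delta V w X" using delta_pair[of x y] edges_pair[of x y] XV by auto
    next
      assume e: "e \<in> delta V w X"
      then obtain x y where xy: "x \<in> V" "y \<in> V" "x \<noteq> y" "e = {x,y}" "w e > 0"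
        using edges_two delta_sub by (metis subsetD)
      then have "x \<in> X \<longleftrightarrow> y \<notin> X" using e delta_pair by metis
      then show "e \<in> (\<lambda>p. {fst p, snd p}) ` P"
      proof (cases "x \<in> X")
        case True
        then have "(x,y) \<in> P" using xy \<open>x \<in> X \<longleftrightarrow> y \<notin> X\<close> unfolding P_def by auto
        then show ?thesis using xy by force
      next
        case False
        then have "(y,x) \<in> P" using xy \<open>x \<in> X \<longleftrightarrow> y \<notin> X\<close> unfolding P_def by (auto simp: insert_commute)
        then show ?thesis using xy by (force simp: insert_commute)
      qed
    qed
  qed
  finally show ?thesis unfolding cut_weight_def by simp
qed

lemma cut_weight_nonneg: "cut_weight w (delta V w X) \<ge> 0"
  unfolding cut_weight_def
proof (intro sum_nonneg)
  fix e assume "e \<in> delta V w X"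
  then have "e \<in> edges V w" using delta_sub by blast
  then show "w e \<ge> 0" using edges_two by fastforce
qed

lemma cut_weight_zero:
  assumes "finite V" "cut_weight w (delta V w X) = 0" shows "delta V w X = {}"
proof -
  have fin: "finite (delta V w X)" using finite_edges[OF assms(1)] delta_sub finite_subset by metis
  have pos: "\<forall>e\<in>delta V w X. w e > 0" using delta_sub edges_two by (metis subsetD)
  show ?thesis
  proof (rule ccontr)
    assume "delta V w X \<noteq> {}"
    then have "cut_weight w (delta V w X) > 0" unfolding cut_weight_def
      using fin pos by (intro sum_pos) auto
    then show False using assms by simp
  qed
qed



abbreviation fsc :: "real \<Rightarrow> ('a \<Rightarrow> real) \<Rightarrow> ('a \<Rightarrow> real)" where
  "fsc \<equiv> (\<lambda>c f x. c * f x)"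

lemma vs_fun: "vector_space (fsc :: real \<Rightarrow> ('a \<Rightarrow> real) \<Rightarrow> ('a \<Rightarrow> real))"
  unfolding vector_space_def by (simp add: fun_eq_iff algebra_simps)

lemma linear_restr:
  "Vector_Spaces.linear (fsc :: real \<Rightarrow> ('a \<Rightarrow> real) \<Rightarrow> ('a \<Rightarrow> real)) (fsc :: real \<Rightarrow> ('b \<Rightarrow> real) \<Rightarrow> ('b \<Rightarrow> real))
     (\<lambda>g e. if e \<in> D then g (h e) else 0)"
  unfolding Vector_Spaces.linear_def module_hom_def module_hom_axioms_def
  using vs_fun[where 'a='a] vs_fun[where 'a='b] unfolding module_iff_vector_space
  by (simp add: fun_eq_iff)

lemma dimspan_image_le:
  fixes S :: "('a \<Rightarrow> real) set" and L :: "('a \<Rightarrow> real) \<Rightarrow> ('b \<Rightarrow> real)"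
  assumes fin: "finite S" and lin: "Vector_Spaces.linear fsc fsc L"
  shows "dimspan (L ` S) \<le> dimspan S"
proof -
  interpret v1: vector_space "fsc :: real \<Rightarrow> ('a \<Rightarrow> real) \<Rightarrow> ('a \<Rightarrow> real)" by (rule vs_fun)
  interpret v2: vector_space "fsc :: real \<Rightarrow> ('b \<Rightarrow> real) \<Rightarrow> ('b \<Rightarrow> real)" by (rule vs_fun)
  obtain B where B: "B \<subseteq> S" "v1.independent B" "S \<subseteq> v1.span B" "card B = v1.dim S"
    using v1.basis_exists by blast
  have fB: "finite B" using B(1) fin finite_subset by blast
  have "L ` S \<subseteq> L ` v1.span B" using B(3) by blast
  also have "L ` v1.span B = v2.span (L ` B)"
    using module_hom.span_image lin unfolding linear_iff_module_hom by blast
  finally have sub: "L ` S \<subseteq> v2.span (L ` B)" .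
  have "v2.dim (L ` S) \<le> card (L ` B)"
    by (rule v2.span_card_ge_dim) (use B(1) sub fB in auto)
  also have "\<dots> \<le> card B" using card_image_le fB by blast
  finally show ?thesis unfolding dimspan_def using B(4) by simp
qed



lemma sep_w_some: "sep_w Xo w {Some x, Some y} = w {x,y}"
proof -
  have "Some -` {Some x, Some y} = {x,y}" by auto
  then show ?thesis unfolding sep_w_def by simp
qed

lemma sep_w_none: "sep_w Xo w {Some x, None} = (\<Sum>y\<in>Xo. w {x,y})"
proof -
  have "Some -` {Some x, None} = {x}" by auto
  then show ?thesis unfolding sep_w_def by (simp add: insert_commute)
qed

lemma sep_wg:
  assumes wg: "weighted_graph V w" and XV: "Xb \<subseteq> V"
  shows "weighted_graph (sep_V Xb) (sep_w (V-Xb) w)"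
  unfolding weighted_graph_def
proof (intro conjI ballI impI)
  show "finite (sep_V Xb)" using wg XV finite_subset unfolding weighted_graph_def sep_V_def by auto
  fix a b assume a: "a \<in> sep_V Xb" and b: "b \<in> sep_V Xb" and ab: "a \<noteq> b"
  have nn: "\<And>x y. x \<in> V \<Longrightarrow> y \<in> V \<Longrightarrow> x \<noteq> y \<Longrightarrow> w {x,y} \<ge> 0" using wg unfolding weighted_graph_def by auto
  have nn2: "\<And>x. x \<in> Xb \<Longrightarrow> (\<Sum>y\<in>V-Xb. w {x,y}) \<ge> 0"
    using nn XV by (intro sum_nonneg) auto
  show "sep_w (V-Xb) w {a,b} \<ge> 0"
  proof (cases a)
    case None
    then obtain y where "b = Some y" "y \<in> Xb" using b ab unfolding sep_V_def by auto
    moreover have "{None, Some y} = {Some y, None}" by auto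
    ultimately show ?thesis using None sep_w_none[of "V-Xb" w y] nn2 by simp
  next
    case (Some x)
    then have x: "x \<in> Xb" using a unfolding sep_V_def by auto
    show ?thesis
    proof (cases b)
      case None then show ?thesis using Some sep_w_none[of "V-Xb" w x] nn2 x by simp
    next
      case (Some y)
      then show ?thesis using \<open>a = Some x\<close> sep_w_some[of "V-Xb" w x y] nn[of x y] x b ab XV
        unfolding sep_V_def by auto
    qed
  qed
qed

lemma sep_cut_weight:
  assumes wg: "weighted_graph V w" and XV: "Xb \<subseteq> V" and Y: "Y \<subseteq> Xb"
  shows "cut_weight (sep_w (V-Xb) w) (delta (sep_V Xb) (sep_w (V-Xb) w) (Some ` Y))
         = cut_weight w (delta V w Y)"
proof -
  have fin: "finite V" using wg unfolding weighted_graph_def by auto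
  let ?w = "sep_w (V-Xb) w"
  have "cut_weight ?w (delta (sep_V Xb) ?w (Some ` Y))
      = (\<Sum>a\<in>Some ` Y. \<Sum>b\<in>sep_V Xb - Some ` Y. ?w {a,b})"
    using cut_weight_formula[OF sep_wg[OF wg XV]] Y unfolding sep_V_def by blast
  also have "\<dots> = (\<Sum>x\<in>Y. \<Sum>b\<in>sep_V Xb - Some ` Y. ?w {Some x,b})"
    by (simp add: sum.reindex)
  also have "\<dots> = (\<Sum>x\<in>Y. \<Sum>z\<in>V-Y. w {x,z})"
  proof (rule sum.cong[OF refl])
    fix x assume "x \<in> Y"
    have e: "sep_V Xb - Some ` Y = insert None (Some ` (Xb - Y))" unfolding sep_V_def by auto
    have fin2: "finite (Xb - Y)" using fin XV finite_subset by blast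
    have "(\<Sum>b\<in>sep_V Xb - Some ` Y. ?w {Some x,b}) = ?w {Some x, None} + (\<Sum>b\<in>Some ` (Xb - Y). ?w {Some x,b})"
      unfolding e using fin2 by (subst sum.insert) auto
    also have "\<dots> = (\<Sum>y\<in>V-Xb. w {x,y}) + (\<Sum>z\<in>Xb - Y. w {x,z})"
      by (simp add: sum.reindex sep_w_none sep_w_some)
    also have "\<dots> = (\<Sum>z\<in>(V-Xb) \<union> (Xb - Y). w {x,z})"
      using fin fin2 by (subst sum.union_disjoint) auto
    also have "(V-Xb) \<union> (Xb - Y) = V - Y" using XV Y by auto
    finally show "(\<Sum>b\<in>sep_V Xb - Some ` Y. ?w {Some x,b}) = (\<Sum>z\<in>V-Y. w {x,z})" .
  qed
  also have "\<dots> = cut_weight w (delta V w Y)"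
    using cut_weight_formula[OF wg] Y XV by auto
  finally show ?thesis .
qed

lemma sep_shore_repr:
  assumes XV: "Xb \<subseteq> V" and sh: "is_shore (sep_V Xb) Y'"
  shows "\<exists>Y. Y \<noteq> {} \<and> Y \<subseteq> Xb \<and> delta (sep_V Xb) w' Y' = delta (sep_V Xb) w' (Some ` Y)"
proof (cases "None \<in> Y'")
  case False
  have "Y' = Some ` (Some -` Y')"
  proof (rule set_eqI)
    fix a show "a \<in> Y' \<longleftrightarrow> a \<in> Some ` (Some -` Y')"
      using False by (cases a) auto
  qed
  moreover have "Some -` Y' \<subseteq> Xb" using sh unfolding is_shore_def sep_V_def by auto
  moreover have "Some -` Y' \<noteq> {}"
  proof
    assume "Some -` Y' = {}"
    then have "Y' = {}" using \<open>Y' = Some ` (Some -` Y')\<close> by simp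
    then show False using sh unfolding is_shore_def by auto
  qed
  ultimately show ?thesis by metis
next
  case True
  define Y where "Y = Xb - Some -` Y'"
  have "sep_V Xb - Y' = Some ` Y" unfolding Y_def sep_V_def using True by auto
  moreover have "Y \<noteq> {}"
  proof
    assume "Y = {}"
    then have "sep_V Xb \<subseteq> Y'" using True unfolding Y_def sep_V_def by auto
    then show False using sh unfolding is_shore_def by auto
  qed
  moreover have "delta (sep_V Xb) w' (sep_V Xb - Y') = delta (sep_V Xb) w' Y'"
    using delta_compl sh unfolding is_shore_def by blast
  moreover have "Y \<subseteq> Xb" unfolding Y_def by auto
  ultimately show ?thesis by metis
qed

lemma sep_shore_some:
  assumes "Y \<noteq> {}" "Y \<subseteq> Xb" shows "is_shore (sep_V Xb) (Some ` Y)"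
  using assms unfolding is_shore_def sep_V_def by auto



lemma bad:
  assumes wg: "weighted_graph V w" and XV: "Xb \<subseteq> V" and Xne: "Xb \<noteq> {}"
    and Wne: "W \<noteq> {}" and WX: "W \<subseteq> V - Xb"
    and S: "delta V w W \<subseteq> delta V w Xb \<union> inner_edges V w Xb"
    and min: "\<forall>T\<in>cuts V w. cut_weight w (delta V w Xb) \<le> cut_weight w T"
    and eq: "cut_weight w (delta V w W) = cut_weight w (delta V w Xb)"
  shows "delta V w W = delta V w Xb"
proof (cases "W = V - Xb")
  case True then show ?thesis using delta_compl[OF XV] by simp
next
  case False
  have fin: "finite V" using wg unfolding weighted_graph_def by auto
  define U where "U = V - Xb - W"
  have Une: "U \<noteq> {}" using False WX unfolding U_def by auto
  have nn: "\<And>x y. x \<in> V \<Longrightarrow> y \<in> V \<Longrightarrow> x \<noteq> y \<Longrightarrow> w {x,y} \<ge> 0" using wg unfolding weighted_graph_def by auto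
  have zero: "w {x,z} = 0" if x: "x \<in> W" and z: "z \<in> U" for x z
  proof -
    have xz: "x \<noteq> z" "x \<in> V" "z \<in> V" "x \<notin> Xb" "z \<notin> Xb" "z \<notin> W" using x z WX unfolding U_def by auto
    have "\<not> w {x,z} > 0"
    proof
      assume pos: "w {x,z} > 0"
      then have "{x,z} \<in> edges V w" using edges_pair xz by metis
      then have "{x,z} \<in> delta V w W" using delta_pair[of x z] xz x by auto
      then have "{x,z} \<in> delta V w Xb \<or> {x,z} \<subseteq> Xb" using S unfolding inner_edges_def by auto
      then show False using delta_pair[of x z] xz by auto
    qed
    then show ?thesis using nn[of x z] xz by auto
  qed
  have finW: "finite W" "finite U" "finite Xb"
    using fin WX XV unfolding U_def by (auto intro: finite_subset[of _ V])
  have "cut_weight w (delta V w W) = (\<Sum>x\<in>W. \<Sum>z\<in>V-W. w {x,z})"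
    using cut_weight_formula[OF wg] WX by auto
  also have "\<dots> = (\<Sum>x\<in>W. \<Sum>z\<in>Xb. w {x,z})"
  proof (rule sum.cong[OF refl])
    fix x assume x: "x \<in> W"
    have e: "V - W = Xb \<union> U" using WX XV unfolding U_def by auto
    have "(\<Sum>z\<in>V-W. w {x,z}) = (\<Sum>z\<in>Xb \<union> U. w {x,z})" by (simp only: e)
    also have "\<dots> = (\<Sum>z\<in>Xb. w {x,z}) + (\<Sum>z\<in>U. w {x,z})"
      using finW by (intro sum.union_disjoint) (auto simp: U_def)
    finally have "(\<Sum>z\<in>V-W. w {x,z}) = (\<Sum>z\<in>Xb. w {x,z}) + (\<Sum>z\<in>U. w {x,z})" .
    also have "(\<Sum>z\<in>U. w {x,z}) = 0" using zero x by simp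
    finally show "(\<Sum>z\<in>V-W. w {x,z}) = (\<Sum>z\<in>Xb. w {x,z})" by simp
  qed
  finally have cW: "cut_weight w (delta V w W) = (\<Sum>x\<in>W. \<Sum>z\<in>Xb. w {x,z})" .
  have "cut_weight w (delta V w U) = (\<Sum>x\<in>U. \<Sum>z\<in>V-U. w {x,z})"
    using cut_weight_formula[OF wg, of U] unfolding U_def by blast
  also have "\<dots> = (\<Sum>x\<in>U. \<Sum>z\<in>Xb. w {x,z})"
  proof (rule sum.cong[OF refl])
    fix x assume x: "x \<in> U"
    have e: "V - U = Xb \<union> W" using WX XV unfolding U_def by auto
    have "(\<Sum>z\<in>V-U. w {x,z}) = (\<Sum>z\<in>Xb \<union> W. w {x,z})" by (simp only: e)
    also have "\<dots> = (\<Sum>z\<in>Xb. w {x,z}) + (\<Sum>z\<in>W. w {x,z})"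
      using finW WX by (intro sum.union_disjoint) auto
    finally have "(\<Sum>z\<in>V-U. w {x,z}) = (\<Sum>z\<in>Xb. w {x,z}) + (\<Sum>z\<in>W. w {x,z})" .
    also have "(\<Sum>z\<in>W. w {x,z}) = 0" using zero x by (simp add: insert_commute)
    finally show "(\<Sum>z\<in>V-U. w {x,z}) = (\<Sum>z\<in>Xb. w {x,z})" by simp
  qed
  finally have cU: "cut_weight w (delta V w U) = (\<Sum>x\<in>U. \<Sum>z\<in>Xb. w {x,z})" .
  have "cut_weight w (delta V w Xb) = cut_weight w (delta V w (V - Xb))"
    using delta_compl[OF XV] by simp
  also have "\<dots> = (\<Sum>x\<in>V-Xb. \<Sum>z\<in>V-(V-Xb). w {x,z})"
    using cut_weight_formula[OF wg] by auto
  also have "V - (V - Xb) = Xb" using XV by auto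
  also have "V - Xb = W \<union> U" using WX unfolding U_def by auto
  also have "(\<Sum>x\<in>W \<union> U. \<Sum>z\<in>Xb. w {x,z}) = (\<Sum>x\<in>W. \<Sum>z\<in>Xb. w {x,z}) + (\<Sum>x\<in>U. \<Sum>z\<in>Xb. w {x,z})"
    using finW by (subst sum.union_disjoint) (auto simp: U_def)
  finally have tot: "cut_weight w (delta V w Xb) = cut_weight w (delta V w W) + cut_weight w (delta V w U)"
    using cW cU by simp
  have "is_shore V U" using Une Xne XV unfolding is_shore_def U_def by auto
  then have "delta V w U \<in> cuts V w" unfolding cuts_def by auto
  then have "cut_weight w (delta V w Xb) \<le> cut_weight w (delta V w U)" using min by auto
  moreover have "cut_weight w (delta V w W) \<ge> 0" by (rule cut_weight_nonneg)
  ultimately have z: "cut_weight w (delta V w W) = 0" "cut_weight w (delta V w Xb) = 0"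
    using tot eq by linarith+
  show ?thesis using cut_weight_zero[OF fin z(1)] cut_weight_zero[OF fin z(2)] by simp
qed



lemma delta_in_D:
  assumes "Y \<subseteq> Xb" shows "delta V w Y \<subseteq> delta V w Xb \<union> inner_edges V w Xb"
proof
  fix e assume e: "e \<in> delta V w Y"
  then have ee: "e \<in> edges V w" using delta_sub by blast
  then obtain x y where xy: "x \<in> V" "y \<in> V" "x \<noteq> y" "e = {x,y}" using edges_two[OF ee] by blast
  then have "x \<in> Y \<longleftrightarrow> y \<notin> Y" using e delta_pair[of x y V w Y] by simp
  then show "e \<in> delta V w Xb \<union> inner_edges V w Xb"
    using xy ee assms delta_pair[of x y V w Xb] unfolding inner_edges_def by auto
qed

lemma Q_chi:
  assumes wg: "weighted_graph V w" and XV: "Xb \<subseteq> V" and Y: "Y \<subseteq> Xb"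
  defines "D \<equiv> delta V w Xb \<union> inner_edges V w Xb"
  defines "lift \<equiv> (\<lambda>e. if e \<subseteq> Xb then Some ` e else insert None (Some ` (e \<inter> Xb)))"
  shows "(\<lambda>e. if e \<in> D then chi (delta (sep_V Xb) (sep_w (V-Xb) w) (Some ` Y)) (lift e) else 0)
         = chi (delta V w Y)"
proof (rule ext)
  fix e
  let ?S = "delta (sep_V Xb) (sep_w (V-Xb) w) (Some ` Y)"
  have key: "lift e \<in> ?S \<longleftrightarrow> e \<in> delta V w Y" if eD: "e \<in> D"
  proof -
    have ee: "e \<in> edges V w" using eD unfolding D_def inner_edges_def using delta_sub by blast
    then obtain x y where xy: "x \<in> V" "y \<in> V" "x \<noteq> y" "e = {x,y}" "w e > 0" using edges_two[OF ee] by blast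
    have "x \<in> Xb \<or> y \<in> Xb"
      using eD xy delta_pair[of x y V w Xb] unfolding D_def inner_edges_def by auto
    then obtain a b where ab: "a \<in> Xb" "b \<in> V" "a \<noteq> b" "e = {a,b}" "w e > 0"
    proof (elim disjE)
      assume "x \<in> Xb" then show ?thesis using xy by (intro that[of x y]) auto
    next
      assume "y \<in> Xb" then show ?thesis using xy by (intro that[of y x]) (auto simp: insert_commute)
    qed
    show ?thesis
    proof (cases "b \<in> Xb")
      case True
      have le: "lift e = {Some a, Some b}" using ab True unfolding lift_def by auto
      have "{Some a, Some b} \<in> edges (sep_V Xb) (sep_w (V-Xb) w)"
        using edges_pair[of "Some a" "Some b"] ab True sep_w_some[of "V-Xb" w a b] unfolding sep_V_def by auto
      then have "lift e \<in> ?S \<longleftrightarrow> (a \<in> Y \<longleftrightarrow> b \<notin> Y)"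
        using le delta_pair[of "Some a" "Some b"] ab by auto
      then show ?thesis using delta_pair[of a b V w Y] ab ee by auto
    next
      case False
      have "e \<inter> Xb = {a}" using ab False by auto
      moreover have "\<not> e \<subseteq> Xb" using ab False by auto
      ultimately have le: "lift e = {Some a, None}" unfolding lift_def by auto
      have nn: "w {a,z} \<ge> 0" if "z \<in> V - Xb" for z
      proof -
        have "a \<noteq> z" "a \<in> V" "z \<in> V" using that ab XV by auto
        then show ?thesis using wg unfolding weighted_graph_def by auto
      qed
      have fin: "finite (V - Xb)" using wg unfolding weighted_graph_def by auto
      have "w {a,b} \<le> (\<Sum>z\<in>V-Xb. w {a,z})"
        using False ab nn fin by (intro member_le_sum) auto
      then have "sep_w (V-Xb) w {Some a, None} > 0" using sep_w_none[of "V-Xb" w a] ab by simp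
      then have "{Some a, None} \<in> edges (sep_V Xb) (sep_w (V-Xb) w)"
        using edges_pair[of "Some a" None] ab unfolding sep_V_def by auto
      then have "lift e \<in> ?S \<longleftrightarrow> a \<in> Y"
        using le delta_pair[of "Some a" None] by auto
      moreover have "b \<notin> Y" using False Y by auto
      ultimately show ?thesis using delta_pair[of a b V w Y] ab ee by auto
    qed
  qed
  have "delta V w Y \<subseteq> D" unfolding D_def by (rule delta_in_D[OF Y])
  then show "(if e \<in> D then chi ?S (lift e) else 0) = chi (delta V w Y) e"
    using key unfolding chi_def by auto
qed

lemma P_chi:
  assumes wg: "weighted_graph V w" and XV: "Xb \<subseteq> V" and Y: "Y \<subseteq> Xb"
  defines "low \<equiv> (\<lambda>e'. if None \<in> e' then {the_elem (Some -` e'), SOME y. y \<in> V - Xb \<and> w {the_elem (Some -` e'), y} > 0}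
                        else Some -` e')"
  shows "(\<lambda>e'. if e' \<in> edges (sep_V Xb) (sep_w (V-Xb) w) then chi (delta V w Y) (low e') else 0)
         = chi (delta (sep_V Xb) (sep_w (V-Xb) w) (Some ` Y))"
proof (rule ext)
  fix e'
  let ?E = "edges (sep_V Xb) (sep_w (V-Xb) w)"
  let ?S = "delta (sep_V Xb) (sep_w (V-Xb) w) (Some ` Y)"
  have key: "low e' \<in> delta V w Y \<longleftrightarrow> e' \<in> ?S" if ee: "e' \<in> ?E"
  proof -
    obtain a b where ab: "a \<in> sep_V Xb" "b \<in> sep_V Xb" "a \<noteq> b" "e' = {a,b}" "sep_w (V-Xb) w e' > 0"
      using edges_two[OF ee] by blast
    have "\<exists>x b. x \<in> Xb \<and> b \<in> sep_V Xb \<and> Some x \<noteq> b \<and> e' = {Some x, b}"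
    proof (cases a)
      case None
      then obtain x where x: "b = Some x" "x \<in> Xb" using ab(2,3) unfolding sep_V_def by blast
      have "e' = {Some x, a}" using ab(4) x(1) by blast
      then show ?thesis using x ab(1,3) None by blast
    next
      case (Some x)
      then have "x \<in> Xb" using ab(1) unfolding sep_V_def by blast
      then show ?thesis using ab Some by blast
    qed
    then obtain x b where xb4: "x \<in> Xb" "b \<in> sep_V Xb" "Some x \<noteq> b" "e' = {Some x, b}" by blast
    have xb: "x \<in> Xb" "b \<in> sep_V Xb" "Some x \<noteq> b" "e' = {Some x, b}" "sep_w (V-Xb) w e' > 0"
      using xb4 ab(5) by auto
    show ?thesis
    proof (cases b)
      case (Some z)
      then have z: "z \<in> Xb" "x \<noteq> z" using xb(2,3) unfolding sep_V_def by auto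
      have e'z: "e' = {Some x, Some z}" using xb(4) Some by simp
      have nn: "None \<notin> e'" using e'z by simp
      have pre: "Some -` e' = {x,z}" using e'z by auto
      have le: "low e' = {x,z}" unfolding low_def using nn pre by simp
      have "w {x,z} > 0" using xb(5) e'z sep_w_some[of "V-Xb" w x z] by simp
      then have "{x,z} \<in> edges V w" using edges_pair[of x z V w] z xb XV by blast
      then have "low e' \<in> delta V w Y \<longleftrightarrow> (x \<in> Y \<longleftrightarrow> z \<notin> Y)" using le delta_pair[of x z V w Y] z by simp
      moreover have "e' \<in> ?S \<longleftrightarrow> (x \<in> Y \<longleftrightarrow> z \<notin> Y)"
        using delta_pair[of "Some x" "Some z" "sep_V Xb" "sep_w (V-Xb) w" "Some ` Y"] e'z ee z(2) by auto
      ultimately show ?thesis by simp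
    next
      case None
      have e'n: "e' = {Some x, None}" using xb(4) None by simp
      have sv: "Some -` e' = {x}" using e'n by auto
      have pos: "(\<Sum>y\<in>V-Xb. w {x,y}) > 0" using xb(5) e'n sep_w_none[of "V-Xb" w x] by simp
      have "\<exists>y. y \<in> V - Xb \<and> w {x,y} > 0"
      proof (rule ccontr)
        assume "\<not> (\<exists>y. y \<in> V - Xb \<and> w {x,y} > 0)"
        then have "(\<Sum>y\<in>V-Xb. w {x,y}) \<le> 0" by (intro sum_nonpos) auto
        then show False using pos by linarith
      qed
      define y where "y = (SOME y. y \<in> V - Xb \<and> w {x,y} > 0)"
      have y0: "y \<in> V - Xb \<and> w {x,y} > 0"
        unfolding y_def by (rule someI_ex) fact
      have nn: "None \<in> e'" using e'n by simp
      have le: "low e' = {x,y}" unfolding low_def y_def using nn sv by simp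
      have y: "y \<in> V" "y \<notin> Xb" "w {x,y} > 0" "x \<noteq> y" using y0 xb(1) by auto
      then have "{x,y} \<in> edges V w" using edges_pair[of x y V w] xb(1) XV by blast
      then have "low e' \<in> delta V w Y \<longleftrightarrow> x \<in> Y" using le delta_pair[of x y V w Y] y Y by auto
      moreover have "e' \<in> ?S \<longleftrightarrow> x \<in> Y"
        using delta_pair[of "Some x" None "sep_V Xb" "sep_w (V-Xb) w" "Some ` Y"] e'n ee by auto
      ultimately show ?thesis by simp
    qed
  qed
  have "?S \<subseteq> ?E" by (rule delta_sub)
  then show "(if e' \<in> ?E then chi (delta V w Y) (low e') else 0) = chi ?S e'"
    using key unfolding chi_def by auto
qed



lemma main_one:
  assumes wg: "weighted_graph V w" and XV: "Xb \<subseteq> V" and Xne: "Xb \<noteq> {}" and XnV: "Xb \<noteq> V"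
    and mc: "delta V w Xb \<in> mincuts V w"
    and cl: "\<forall>Y. is_shore V Y \<and> delta V w Y \<in> mincuts V w \<and> delta V w Y \<noteq> delta V w Xb \<longrightarrow> \<not> crosses V Xb Y"
  shows "dimspan (chi ` {S \<in> mincuts V w. S \<subseteq> delta V w Xb \<union> inner_edges V w Xb})
         = cdim (sep_V Xb) (sep_w (V - Xb) w)"
proof -
  define lam where "lam = cut_weight w (delta V w Xb)"
  let ?V' = "sep_V Xb" and ?w' = "sep_w (V - Xb) w"
  have fin: "finite V" using wg unfolding weighted_graph_def by auto
  have min: "\<forall>T\<in>cuts V w. lam \<le> cut_weight w T" using mc unfolding mincuts_def lam_def by auto
  have shoreY: "is_shore V Y" if "Y \<noteq> {}" "Y \<subseteq> Xb" for Y
    using that XV XnV unfolding is_shore_def by auto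
  have mc_iff: "delta V w Y \<in> mincuts V w \<longleftrightarrow> cut_weight w (delta V w Y) = lam" if YS: "is_shore V Y" for Y
  proof
    have c: "delta V w Y \<in> cuts V w" using YS unfolding cuts_def by blast
    have cx: "delta V w Xb \<in> cuts V w" using mc unfolding mincuts_def by blast
    {
      assume "delta V w Y \<in> mincuts V w"
      then have "cut_weight w (delta V w Y) \<le> lam" using cx unfolding mincuts_def lam_def by blast
      moreover have "lam \<le> cut_weight w (delta V w Y)" using min c by blast
      ultimately show "cut_weight w (delta V w Y) = lam" by linarith
    }
    {
      assume eq: "cut_weight w (delta V w Y) = lam"
      have "\<forall>T\<in>cuts V w. cut_weight w (delta V w Y) \<le> cut_weight w T" using min eq by simp
      then show "delta V w Y \<in> mincuts V w" using c unfolding mincuts_def by blast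
    }
  qed
  define \<Y> where "\<Y> = {Y. Y \<noteq> {} \<and> Y \<subseteq> Xb \<and> cut_weight w (delta V w Y) = lam}"
  have finY: "finite \<Y>"
  proof -
    have "\<Y> \<subseteq> Pow Xb" unfolding \<Y>_def by auto
    moreover have "finite Xb" using fin XV finite_subset by blast
    ultimately show ?thesis using finite_subset by blast
  qed
  have Xb_in: "Xb \<in> \<Y>" using Xne unfolding \<Y>_def lam_def by auto
  have C1: "{S \<in> mincuts V w. S \<subseteq> delta V w Xb \<union> inner_edges V w Xb} = (\<lambda>Y. delta V w Y) ` \<Y>"
  proof (rule set_eqI, rule iffI)
    fix S assume S: "S \<in> {S \<in> mincuts V w. S \<subseteq> delta V w Xb \<union> inner_edges V w Xb}"
    then have Smc: "S \<in> mincuts V w" and Ssub0: "S \<subseteq> delta V w Xb \<union> inner_edges V w Xb" by auto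
    then obtain Y where Y: "is_shore V Y" "S = delta V w Y" unfolding mincuts_def cuts_def by blast
    have wS: "cut_weight w (delta V w Y) = lam" using mc_iff[OF Y(1)] Y(2) Smc by simp
    have Ssub: "delta V w Y \<subseteq> delta V w Xb \<union> inner_edges V w Xb" using Ssub0 Y(2) by simp
    show "S \<in> (\<lambda>Y. delta V w Y) ` \<Y>"
    proof (cases "delta V w Y = delta V w Xb")
      case True then have "S = delta V w Xb" using Y(2) by simp
      then show ?thesis using Xb_in by blast
    next
      case False
      then have nc: "\<not> crosses V Xb Y" using cl Y Smc by blast
      have YV: "Y \<subseteq> V" "Y \<noteq> {}" "Y \<noteq> V" using Y unfolding is_shore_def by auto
      have bad': False if W: "W \<noteq> {}" "W \<subseteq> V - Xb" "delta V w W = delta V w Y" for W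
      proof -
        have "delta V w W \<subseteq> delta V w Xb \<union> inner_edges V w Xb" using W(3) Ssub by simp
        moreover have "cut_weight w (delta V w W) = cut_weight w (delta V w Xb)" using W(3) wS lam_def by simp
        ultimately have "delta V w W = delta V w Xb" by (rule bad[OF wg XV Xne W(1,2) _ min[unfolded lam_def]])
        then show False using W(3) False by simp
      qed
      consider "Xb \<inter> Y = {}" | "Xb - Y = {}" | "Y - Xb = {}" | "V - (Xb \<union> Y) = {}"
        using nc unfolding crosses_def by blast
      then show ?thesis
      proof cases
        case 1 then have "Y \<subseteq> V - Xb" using YV by blast
        then show ?thesis using bad'[of Y] YV by blast
      next
        case 2
        then have "V - Y \<subseteq> V - Xb" "V - Y \<noteq> {}" using YV by blast+
        moreover have "delta V w (V - Y) = delta V w Y" using delta_compl[of Y V w] YV by simp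
        ultimately show ?thesis using bad'[of "V - Y"] by blast
      next
        case 3
        then have "Y \<in> \<Y>" using YV wS unfolding \<Y>_def by blast
        then show ?thesis using Y by blast
      next
        case 4
        then have "V - Y \<subseteq> Xb" "V - Y \<noteq> {}" using YV by blast+
        moreover have "delta V w (V - Y) = delta V w Y" using delta_compl[of Y V w] YV by simp
        ultimately have "V - Y \<in> \<Y>" using wS unfolding \<Y>_def by simp
        moreover have "S = delta V w (V - Y)" using Y(2) delta_compl[of Y V w] YV by simp
        ultimately show ?thesis by blast
      qed
    qed
  next
    fix S assume "S \<in> (\<lambda>Y. delta V w Y) ` \<Y>"
    then obtain Y where Y: "Y \<in> \<Y>" "S = delta V w Y" by auto
    have Yp: "Y \<noteq> {}" "Y \<subseteq> Xb" "cut_weight w (delta V w Y) = lam" using Y(1) unfolding \<Y>_def by blast+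
    have "S \<in> mincuts V w" using mc_iff[OF shoreY[OF Yp(1,2)]] Yp(3) Y(2) by simp
    moreover have "S \<subseteq> delta V w Xb \<union> inner_edges V w Xb" using delta_in_D[of Y Xb V w] Y(2) Yp(2) by simp
    ultimately show "S \<in> {S \<in> mincuts V w. S \<subseteq> delta V w Xb \<union> inner_edges V w Xb}" by blast
  qed
  have cw': "cut_weight ?w' (delta ?V' ?w' (Some ` Y)) = cut_weight w (delta V w Y)" if "Y \<subseteq> Xb" for Y
    using sep_cut_weight[OF wg XV that] .
  have C2: "mincuts ?V' ?w' = (\<lambda>Y. delta ?V' ?w' (Some ` Y)) ` \<Y>"
  proof (rule set_eqI, rule iffI)
    fix S assume S: "S \<in> mincuts ?V' ?w'"
    then obtain Y' where Y': "is_shore ?V' Y'" "S = delta ?V' ?w' Y'" unfolding mincuts_def cuts_def by auto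
    obtain Y where Y: "Y \<noteq> {}" "Y \<subseteq> Xb" "S = delta ?V' ?w' (Some ` Y)"
      using sep_shore_repr[OF XV Y'(1), of ?w'] Y'(2) by blast
    have "delta ?V' ?w' (Some ` Xb) \<in> cuts ?V' ?w'" using sep_shore_some[OF Xne] unfolding cuts_def by auto
    then have "cut_weight ?w' S \<le> lam" using S cw'[of Xb] unfolding mincuts_def lam_def by auto
    moreover have "cut_weight ?w' S \<ge> lam"
      using cw'[OF Y(2)] Y min shoreY[OF Y(1,2)] unfolding cuts_def by auto
    ultimately have "Y \<in> \<Y>" using Y cw'[OF Y(2)] unfolding \<Y>_def by auto
    then show "S \<in> (\<lambda>Y. delta ?V' ?w' (Some ` Y)) ` \<Y>" using Y by auto
  next
    fix S assume "S \<in> (\<lambda>Y. delta ?V' ?w' (Some ` Y)) ` \<Y>"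
    then obtain Y where Y: "Y \<in> \<Y>" "S = delta ?V' ?w' (Some ` Y)" by auto
    have Yp: "Y \<noteq> {}" "Y \<subseteq> Xb" "cut_weight w (delta V w Y) = lam" using Y unfolding \<Y>_def by auto
    have "S \<in> cuts ?V' ?w'" using sep_shore_some[OF Yp(1,2)] Y unfolding cuts_def by auto
    moreover have "cut_weight ?w' S \<le> cut_weight ?w' T" if T: "T \<in> cuts ?V' ?w'" for T
    proof -
      obtain Y' where Y': "is_shore ?V' Y'" "T = delta ?V' ?w' Y'" using T unfolding cuts_def by auto
      obtain Y2 where Y2: "Y2 \<noteq> {}" "Y2 \<subseteq> Xb" "T = delta ?V' ?w' (Some ` Y2)"
        using sep_shore_repr[OF XV Y'(1), of ?w'] Y'(2) by blast
      have "delta V w Y2 \<in> cuts V w" using shoreY[OF Y2(1,2)] unfolding cuts_def by auto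
      then have "lam \<le> cut_weight w (delta V w Y2)" using min by blast
      moreover have "cut_weight ?w' T = cut_weight w (delta V w Y2)" using Y2(3) cw'[OF Y2(2)] by simp
      moreover have "cut_weight ?w' S = lam" using Y(2) cw'[OF Yp(2)] Yp(3) by simp
      ultimately show ?thesis by linarith
    qed
    ultimately show "S \<in> mincuts ?V' ?w'" unfolding mincuts_def by auto
  qed
  define D where "D = delta V w Xb \<union> inner_edges V w Xb"
  define lift where "lift = (\<lambda>e. if e \<subseteq> Xb then Some ` e else insert None (Some ` (e \<inter> Xb)))"
  define low where "low = (\<lambda>e'. if None \<in> e' then {the_elem (Some -` e'), SOME y. y \<in> V - Xb \<and> w {the_elem (Some -` e'), y} > 0}
                        else Some -` e')"
  define Q :: "('a option set \<Rightarrow> real) \<Rightarrow> ('a set \<Rightarrow> real)" where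
    "Q = (\<lambda>g e. if e \<in> D then g (lift e) else 0)"
  define P :: "('a set \<Rightarrow> real) \<Rightarrow> ('a option set \<Rightarrow> real)" where
    "P = (\<lambda>f e'. if e' \<in> edges ?V' ?w' then f (low e') else 0)"
  have linQ: "Vector_Spaces.linear fsc fsc Q" unfolding Q_def by (rule linear_restr)
  have linP: "Vector_Spaces.linear fsc fsc P" unfolding P_def by (rule linear_restr)
  define A where "A = (\<lambda>Y. chi (delta V w Y)) ` \<Y>"
  define B where "B = (\<lambda>Y. chi (delta ?V' ?w' (Some ` Y))) ` \<Y>"
  have A: "chi ` {S \<in> mincuts V w. S \<subseteq> delta V w Xb \<union> inner_edges V w Xb} = A"
    unfolding C1 A_def by (simp add: image_image)
  have B: "chi ` mincuts ?V' ?w' = B" unfolding C2 B_def by (simp add: image_image)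
  have QB: "Q ` B = A" unfolding B_def A_def image_image
  proof (rule image_cong[OF refl])
    fix Y assume "Y \<in> \<Y>"
    then have YX: "Y \<subseteq> Xb" unfolding \<Y>_def by auto
    show "Q (chi (delta ?V' ?w' (Some ` Y))) = chi (delta V w Y)"
      unfolding Q_def D_def lift_def by (rule Q_chi[OF wg XV YX])
  qed
  have PA: "P ` A = B" unfolding B_def A_def image_image
  proof (rule image_cong[OF refl])
    fix Y assume "Y \<in> \<Y>"
    then have YX: "Y \<subseteq> Xb" unfolding \<Y>_def by auto
    show "P (chi (delta V w Y)) = chi (delta ?V' ?w' (Some ` Y))"
      unfolding P_def low_def by (rule P_chi[OF wg XV YX])
  qed
  have finA: "finite A" "finite B" unfolding A_def B_def using finY by auto
  have "dimspan A \<le> dimspan B" using dimspan_image_le[OF finA(2) linQ] QB by simp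
  moreover have "dimspan B \<le> dimspan A" using dimspan_image_le[OF finA(1) linP] PA by simp
  ultimately show ?thesis unfolding cdim_def A B by simp
qed


theorem lemma13:
  fixes V :: "'v set" and w :: "'v set \<Rightarrow> real" and X0 :: "'v set"
  assumes "weighted_graph V w"
    and "is_shore V X0"
    and "delta V w X0 \<in> mincuts V w"
    and "crossless V w X0"
    and "nonstar V X0"
  shows "\<forall>Xb \<in> {X0, V - X0}.
           dimspan (chi ` {S \<in> mincuts V w. S \<subseteq> delta V w X0 \<union> inner_edges V w Xb})
             = cdim (sep_V Xb) (sep_w (V - Xb) w)"
proof
  fix Xb assume Xb: "Xb \<in> {X0, V - X0}"
  have X0: "X0 \<subseteq> V" "X0 \<noteq> {}" "X0 \<noteq> V" using assms(2) unfolding is_shore_def by auto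
  have cl: "\<forall>Y. is_shore V Y \<and> delta V w Y \<in> mincuts V w \<and> delta V w Y \<noteq> delta V w X0 \<longrightarrow> \<not> crosses V X0 Y"
    using assms(4) unfolding crossless_def by blast
  show "dimspan (chi ` {S \<in> mincuts V w. S \<subseteq> delta V w X0 \<union> inner_edges V w Xb})
             = cdim (sep_V Xb) (sep_w (V - Xb) w)"
  proof (cases "Xb = X0")
    case True
    have "dimspan (chi ` {S \<in> mincuts V w. S \<subseteq> delta V w X0 \<union> inner_edges V w X0})
             = cdim (sep_V X0) (sep_w (V - X0) w)"
      by (rule main_one[OF assms(1) X0 assms(3) cl])
    then show ?thesis using True by simp
  next
    case False
    then have XbE: "Xb = V - X0" using Xb by auto
    have dd: "delta V w (V - X0) = delta V w X0" using delta_compl[OF X0(1)] .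
    have cl2: "\<forall>Y. is_shore V Y \<and> delta V w Y \<in> mincuts V w \<and> delta V w Y \<noteq> delta V w (V - X0)
                 \<longrightarrow> \<not> crosses V (V - X0) Y"
    proof (intro allI impI notI)
      fix Y assume Y: "is_shore V Y \<and> delta V w Y \<in> mincuts V w \<and> delta V w Y \<noteq> delta V w (V - X0)"
        and c: "crosses V (V - X0) Y"
      then have nc: "\<not> crosses V X0 Y" using cl dd by auto
      have YV: "Y \<subseteq> V" using Y unfolding is_shore_def by auto
      have e1: "Y - (V - X0) = X0 \<inter> Y" using YV by blast
      have e2: "V - ((V - X0) \<union> Y) = X0 - Y" using X0(1) by blast
      have e3: "(V - X0) \<inter> Y = Y - X0" using YV by blast
      have e4: "(V - X0) - Y = V - (X0 \<union> Y)" by blast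
      have "crosses V X0 Y" using c unfolding crosses_def e1 e2 e3 e4 by blast
      then show False using nc by contradiction
    qed
    have m: "delta V w (V - X0) \<in> mincuts V w" using dd assms(3) by simp
    have vv: "V - (V - X0) = X0" using X0(1) by blast
    have ne: "V - X0 \<noteq> {}" "V - X0 \<noteq> V" using X0 assms(2) unfolding is_shore_def by blast+
    have "dimspan (chi ` {S \<in> mincuts V w. S \<subseteq> delta V w (V - X0) \<union> inner_edges V w (V - X0)})
             = cdim (sep_V (V - X0)) (sep_w (V - (V - X0)) w)"
      by (rule main_one[OF assms(1) Diff_subset ne m cl2])
    then show ?thesis unfolding XbE dd vv .
  qed
qed
end
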